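(* Let $\lambda_{\min}<\lambda_{\max}$ and let $h\colon\mathbb{R}\to\mathbb{R}$ be continuous and $(\lambda_{\max}-\lambda_{\min})$-periodic, having only one maximum point on $[\lambda_{\min},\lambda_{\max})$ (i.e. on one period). Let $\mathcal{F}$ be the generalized von Mises family generated by $h$, consisting of the functions on $[\lambda_{\min},\lambda_{\max}]$ \[ f_{a,b,s}(\lambda)=\exp\bigl(b+a\,h(\lambda-s)\bigr),\qquad a\ge 0,\ b\in\mathbb{R},\ s\in\mathbb{R}. \] Assume $\mathcal{F}$ is closed under pointwise multiplication. Then $\mathcal{F}$ is the von Mises family, i.e. one can take $h(\lambda)=\cos\frac{2\pi\lambda}{\lambda_{\max}-\lambda_{\min}}$ (the family $\mathcal{F}$ coincides with $\{\exp(b+a\cos\frac{2\pi(\lambda-s)}{\lambda_{\max}-\lambda_{\min}}):a\ge0,\,b,s\in\mathbb{R}\}$). *)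

theory Defs
  imports Complex_Main
begin

definition gvM_family :: "(real \<Rightarrow> real) \<Rightarrow> real \<Rightarrow> real \<Rightarrow> (real \<Rightarrow> real) set" where
  "gvM_family h lmin lmax =
     {(\<lambda>x. if x \<in> {lmin..lmax} then exp (b + a * h (x - s)) else 0) | a b s. a \<ge> 0}"

definition mult_closed :: "(real \<Rightarrow> real) set \<Rightarrow> bool" where
  "mult_closed F \<longleftrightarrow> (\<forall>f\<in>F. \<forall>g\<in>F. (\<lambda>x. f x * g x) \<in> F)"

end

theory Submission
  imports Defs "HOL-Analysis.Analysis"
begin


lemma periodic_nat:
  fixes f :: "real \<Rightarrow> 'a"
  assumes "\<forall>x. f (x + T) = f x"
  shows "f (x + real m * T) = f x"
proof (induction m arbitrary: x)
  case 0 then show ?case by simp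
next
  case (Suc m)
  have "f (x + real (Suc m) * T) = f ((x + real m * T) + T)" by (simp add: algebra_simps)
  also have "\<dots> = f (x + real m * T)" using assms by blast
  also have "\<dots> = f x" using Suc by blast
  finally show ?case .
qed

lemma periodic_int:
  fixes f :: "real \<Rightarrow> 'a"
  assumes "\<forall>x. f (x + T) = f x"
  shows "f (x + of_int n * T) = f x"
proof (cases "n \<ge> 0")
  case True
  then obtain m where "n = int m" by (metis nonneg_eq_int)
  then show ?thesis using periodic_nat[OF assms] by simp
next
  case False
  define m where "m = nat (- n)"
  have m: "n = - int m" using False unfolding m_def by simp
  have "f x = f ((x - real m * T) + real m * T)" by simp
  also have "\<dots> = f (x - real m * T)" using periodic_nat[OF assms] by blast
  finally show ?thesis using m by simp
qed

lemma periodic_reduce: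
  fixes T :: real
  assumes "T > 0"
  obtains y n where "y \<in> {a..<a+T}" "x = y + of_int n * T"
proof -
  define n where "n = \<lfloor>(x - a) / T\<rfloor>"
  define y where "y = x - of_int n * T"
  have "of_int n \<le> (x - a) / T" "(x - a) / T < of_int n + 1"
    unfolding n_def by (simp_all add: of_int_floor_le)
  then have "of_int n * T \<le> x - a" "x - a < (of_int n + 1) * T"
    using assms by (simp_all add: field_simps)
  then have "y \<in> {a..<a+T}" unfolding y_def by (auto simp: algebra_simps)
  then show ?thesis using that[of y n] unfolding y_def by simp
qed


lemma per_integral_shift0:
  fixes f :: "real \<Rightarrow> complex"
  assumes T: "T > 0" and c: "continuous_on UNIV f" and p: "\<forall>x. f (x + T) = f x"
  shows "integral {a..a+T} f = integral {0..T} f"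
proof -
  obtain r n where r: "r \<in> {0..<0+T}" "a = r + of_int n * T" using periodic_reduce[OF T] by blast
  have int: "f integrable_on {u..v}" for u v
    by (rule integrable_continuous_interval) (rule continuous_on_subset[OF c], auto)
  have fc: "f \<circ> (+) c' = f" if "c' = of_int m * T" for c' m
    using periodic_int[OF p, of _ m] that by (auto simp: add.commute)
  have "integral {a..a+T} f = integral {r..r+T} (f \<circ> (+) (of_int n * T))"
    using integral_shift_Icc_real[of r "r+T" f "of_int n * T"] r by (simp add: algebra_simps)
  also have "\<dots> = integral {r..r+T} f" using fc by simp
  also have "\<dots> = integral {r..T} f + integral {T..T+r} f"
    using Henstock_Kurzweil_Integration.integral_combine[where a=r and c=T and b="r+T" and f=f] r int by (simp add: add.commute)
  also have "integral {T..T+r} f = integral {0..r} (f \<circ> (+) T)"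
    using integral_shift_Icc_real[of 0 r f T] by (simp add: add.commute)
  also have "\<dots> = integral {0..r} f" using fc[of T 1] by simp
  also have "integral {r..T} f + integral {0..r} f = integral {0..T} f"
    using Henstock_Kurzweil_Integration.integral_combine[where a=0 and c=r and b=T and f=f] r int by (simp add: add.commute)
  finally show ?thesis .
qed

lemma per_integral_shift:
  fixes f :: "real \<Rightarrow> complex"
  assumes T: "T > 0" and c: "continuous_on UNIV f" and p: "\<forall>x. f (x + T) = f x"
  shows "integral {0..T} (\<lambda>x. f (x - s)) = integral {0..T} f"
proof -
  have "integral {0..T} (\<lambda>x. f (x - s)) = integral {0..T} (f \<circ> (+) (-s))"
    by (simp add: o_def)
  also have "\<dots> = integral {-s..-s+T} f"
    using integral_shift_Icc_real[of 0 T f "-s"] by (simp add: add.commute)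
  also have "\<dots> = integral {0..T} f" by (rule per_integral_shift0[OF assms])
  finally show ?thesis .
qed

lemma cis_mult_eq: "a + b = c \<Longrightarrow> cis a * cis b = cis c"
  by (simp add: cis_mult)

lemma cis_minus_pi: "cis (- pi) = -1"
  by (simp add: complex_eq_iff)

definition coefC :: "real \<Rightarrow> (real \<Rightarrow> complex) \<Rightarrow> int \<Rightarrow> complex" where
  "coefC T f k = integral {0..T} (\<lambda>x. f x * cis (- (of_int k * (2*pi/T) * x)))"

lemma cis_per:
  assumes "T > 0"
  shows "cis (- (of_int k * (2*pi/T) * (x + T))) = cis (- (of_int k * (2*pi/T) * x))"
proof -
  have "- (of_int k * (2*pi/T) * (x + T)) = - (of_int k * (2*pi/T) * x) + 2 * pi * of_int (-k)"
    using assms by (simp add: field_simps)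
  then have "cis (- (of_int k * (2*pi/T) * (x + T))) = cis (- (of_int k * (2*pi/T) * x)) * cis (2 * pi * of_int (-k))"
    by (metis cis_mult)
  also have "cis (2 * pi * of_int (-k)) = 1" by (rule cis_multiple_2pi) simp
  finally show ?thesis by simp
qed

lemma coef_shift:
  assumes T: "T > 0" and c: "continuous_on UNIV f" and p: "\<forall>x. f (x + T) = f x"
  shows "coefC T (\<lambda>x. f (x - s)) k = cis (- (of_int k * (2*pi/T) * s)) * coefC T f k"
proof -
  define e where "e = (\<lambda>x. cis (- (of_int k * (2*pi/T) * x)))"
  define \<phi> where "\<phi> = (\<lambda>y. f y * e y)"
  have ee: "e s * e (x - s) = e x" for x
    unfolding e_def by (rule cis_mult_eq) (simp add: algebra_simps diff_divide_distrib)
  have eq: "f (x - s) * e x = e s * \<phi> (x - s)" for x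
    unfolding \<phi>_def using ee[of x] by (simp add: algebra_simps)
  have pc: "continuous_on UNIV \<phi>"
    unfolding \<phi>_def e_def by (intro continuous_intros c)
  have pp: "\<forall>x. \<phi> (x + T) = \<phi> x"
    unfolding \<phi>_def e_def using p cis_per[OF T] by simp
  have "coefC T (\<lambda>x. f (x - s)) k = integral {0..T} (\<lambda>x. f (x - s) * e x)"
    unfolding coefC_def e_def by simp
  also have "\<dots> = integral {0..T} (\<lambda>x. e s * \<phi> (x - s))"
    using eq by simp
  also have "\<dots> = e s * integral {0..T} (\<lambda>x. \<phi> (x - s))" by simp
  also have "\<dots> = e s * integral {0..T} \<phi>" using per_integral_shift[OF T pc pp] by simp
  finally show ?thesis unfolding coefC_def \<phi>_def e_def .
qed

lemma coef_const_zero: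
  assumes T: "T > 0" and k: "k \<noteq> 0"
  shows "coefC T (\<lambda>x. c) k = 0"
proof -
  have "coefC T (\<lambda>x. c) k = cis (- (of_int k * (2*pi/T) * (T / (2 * of_int k)))) * coefC T (\<lambda>x. c) k"
    using coef_shift[OF T, of "\<lambda>x. c" "T / (2 * of_int k)" k] by simp
  also have "of_int k * (2*pi/T) * (T / (2 * of_int k)) = pi" using T k by (simp add: field_simps)
  finally have "coefC T (\<lambda>x. c) k = - coefC T (\<lambda>x. c) k" by (simp add: cis_minus_pi)
  then show ?thesis by simp
qed

lemma coef_add:
  assumes "continuous_on UNIV f" "continuous_on UNIV g"
  shows "coefC T (\<lambda>x. f x + g x) k = coefC T f k + coefC T g k"
proof -
  have i: "(\<lambda>x. h x * cis (- (of_int k * (2*pi/T) * x))) integrable_on {0..T}"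
    if "continuous_on UNIV h" for h :: "real \<Rightarrow> complex"
    by (rule integrable_continuous_interval) (intro continuous_intros continuous_on_subset[OF that], auto)
  show ?thesis unfolding coefC_def distrib_right
    by (rule integral_add[OF i[OF assms(1)] i[OF assms(2)]])
qed

lemma coef_cmult: "coefC T (\<lambda>x. c * f x) k = c * coefC T f k"
  unfolding coefC_def by (simp add: mult.assoc)

lemma coef_cis:
  assumes T: "T > 0"
  shows "coefC T (\<lambda>x. cis (of_int j * (2*pi/T) * x)) k = (if j = k then of_real T else 0)"
proof -
  have "cis (of_int j * (2*pi/T) * x) * cis (- (of_int k * (2*pi/T) * x))
        = 1 * cis (- (of_int (k - j) * (2*pi/T) * x))" for x
    unfolding mult_1 by (rule cis_mult_eq) (simp add: algebra_simps diff_divide_distrib)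
  then have "coefC T (\<lambda>x. cis (of_int j * (2*pi/T) * x)) k = coefC T (\<lambda>x. 1) (k - j)"
    unfolding coefC_def by simp
  also have "\<dots> = (if j = k then of_real T else 0)"
  proof (cases "j = k")
    case True
    then show ?thesis using T unfolding coefC_def by (simp add: scaleR_conv_of_real)
  next
    case False
    then show ?thesis using coef_const_zero[OF T, of "k - j" 1] by simp
  qed
  finally show ?thesis .
qed



inductive EP :: "real \<Rightarrow> (real \<Rightarrow> complex) \<Rightarrow> bool" for w where
  EPb: "EP w (\<lambda>x. c * cis (of_int k * w * x))"
| EPa: "EP w p \<Longrightarrow> EP w q \<Longrightarrow> EP w (\<lambda>x. p x + q x)"

lemma EP_cont: "EP w p \<Longrightarrow> continuous_on UNIV p"
  by (induction rule: EP.induct) (auto intro!: continuous_intros)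

lemma EP_mult:
  assumes "EP w p" "EP w q"
  shows "EP w (\<lambda>x. p x * q x)"
  using assms
proof (induction arbitrary: q rule: EP.induct)
  case (EPb c k)
  from EPb.prems show ?case
  proof (induction rule: EP.induct)
    case (EPb d j)
    have "c * cis (of_int k * w * x) * (d * cis (of_int j * w * x)) = (c * d) * cis (of_int (k + j) * w * x)" for x
    proof -
      have "cis (of_int k * w * x) * cis (of_int j * w * x) = cis (of_int (k + j) * w * x)"
        by (rule cis_mult_eq) (simp add: algebra_simps)
      then show ?thesis by (metis mult.assoc mult.left_commute)
    qed
    then have eqm: "(\<lambda>x. c * cis (of_int k * w * x) * (d * cis (of_int j * w * x))) = (\<lambda>x. (c * d) * cis (of_int (k + j) * w * x))"
      by (rule ext)
    show ?case by (subst eqm) (rule EP.EPb)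
  next
    case (EPa p1 q1)
    then show ?case unfolding distrib_left by (intro EP.EPa) auto
  qed
next
  case (EPa p1 p2)
  then show ?case unfolding distrib_right by (intro EP.EPa) auto
qed

lemma EP_const: "EP w (\<lambda>x. c)"
  using EP.EPb[of w c 0] by simp

lemma EP_cos: "EP w (\<lambda>x. of_real (cos (w * x)))"
proof -
  have eq: "(\<lambda>x. of_real (cos (w * x))) = (\<lambda>x. (1/2) * cis (of_int 1 * w * x) + (1/2) * cis (of_int (-1) * w * x))"
    by (rule ext) (simp add: complex_eq_iff)
  then show ?thesis by (subst eq) (intro EP.EPa EP.EPb)
qed

lemma EP_sin: "EP w (\<lambda>x. of_real (sin (w * x)))"
proof -
  have eq: "(\<lambda>x. of_real (sin (w * x))) = (\<lambda>x. (-\<i>/2) * cis (of_int 1 * w * x) + (\<i>/2) * cis (of_int (-1) * w * x))"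
    by (rule ext) (simp add: complex_eq_iff)
  then show ?thesis by (subst eq) (intro EP.EPa EP.EPb)
qed

lemma EP_pair:
  assumes T: "T > 0" and w: "w = 2*pi/T" and gc: "continuous_on UNIV g"
    and c0: "\<forall>k. coefC T (\<lambda>x. of_real (g x)) k = 0"
  shows "EP w p \<Longrightarrow> integral {0..T} (\<lambda>x. of_real (g x) * p x) = 0"
proof (induction rule: EP.induct)
  case (EPb c k)
  have "(\<lambda>x. complex_of_real (g x) * (c * cis (of_int k * w * x))) =
        (\<lambda>x. c * (complex_of_real (g x) * cis (- (of_int (-k) * (2*pi/T) * x))))"
    by (rule ext) (simp add: w mult_ac)
  then show ?case using c0[rule_format, of "-k"] unfolding coefC_def by simp
next
  case (EPa p q)
  have i: "(\<lambda>x. complex_of_real (g x) * r x) integrable_on {0..T}" if "EP w r" for r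
    by (rule integrable_continuous_interval)
       (intro continuous_intros continuous_on_subset[OF EP_cont[OF that]] continuous_on_subset[OF gc], auto)
  show ?case unfolding distrib_left
    using integral_add[OF i[OF EPa.hyps(1)] i[OF EPa.hyps(2)]] EPa.IH by simp
qed

lemma cis_eq_imp:
  assumes "cis a = cis b"
  obtains n :: int where "a = b + 2 * pi * of_int n"
proof -
  from assms have "exp (\<i> * of_real a) = exp (\<i> * of_real b)" by (simp add: cis_conv_exp)
  then obtain n :: int where "\<i> * of_real a = \<i> * of_real b + (of_int (2 * n) * pi) * \<i>"
    using exp_eq by blast
  then have "Im (\<i> * of_real a) = Im (\<i> * of_real b + (of_int (2 * n) * pi) * \<i>)" by simp
  then have "a = b + 2 * pi * of_int n" by simp
  then show ?thesis by (rule that)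
qed

lemma fourier_unique:
  fixes g :: "real \<Rightarrow> real"
  assumes T: "T > 0" and gc: "continuous_on UNIV g" and gp: "\<forall>x. g (x + T) = g x"
    and c0: "\<forall>k. coefC T (\<lambda>x. of_real (g x)) k = 0"
  shows "g x = 0"
proof -
  define w where "w = 2*pi/T"
  have w: "w > 0" using T unfolding w_def by simp
  define S where "S = sphere (0::complex) 1"
  define q where "q = (\<lambda>x::real. cis (w * x))"
  define G where "G = (\<lambda>z. g (Arg z / w))"
  have cisArg: "cis (Arg z) = z" if "z \<in> S" for z
    using rcis_cmod_Arg[of z] that unfolding S_def rcis_def by simp
  have qS: "q t \<in> S" for t unfolding q_def S_def by simp
  have Gq: "G (q t) = g t" for t
  proof -
    have "cis (Arg (q t)) = cis (w * t)" using cisArg[OF qS] unfolding q_def by simp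
    then obtain n :: int where n: "Arg (q t) = w * t + 2 * pi * of_int n" by (rule cis_eq_imp)
    have "Arg (q t) / w = t + of_int n * T" using n w T unfolding w_def by (simp add: field_simps)
    then show ?thesis unfolding G_def using periodic_int[OF gp] by simp
  qed
  have qc: "continuous_on UNIV q" unfolding q_def by (intro continuous_intros)
  have Gc: "continuous_on S G"
    unfolding continuous_on_closed_invariant
  proof (intro allI impI)
    fix B :: "real set" assume B: "closed B"
    define K where "K = {-T/2..T/2} \<inter> g -` B"
    have "compact K" unfolding K_def
      by (intro compact_Int_closed compact_Icc closed_vimage B gc)
    then have cA: "closed (q ` K)"
      by (intro compact_imp_closed compact_continuous_image continuous_on_subset[OF qc]) auto
    have "q ` K \<inter> S = G -` B \<inter> S"
    proof
      show "q ` K \<inter> S \<subseteq> G -` B \<inter> S" using Gq unfolding K_def by auto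
      show "G -` B \<inter> S \<subseteq> q ` K \<inter> S"
      proof
        fix z assume z: "z \<in> G -` B \<inter> S"
        define t where "t = Arg z / w"
        have "q t = z" unfolding q_def t_def using w cisArg z by simp
        moreover have "t \<in> {-T/2..T/2}"
        proof -
          have "-pi \<le> Arg z" "Arg z \<le> pi" using Arg_bounded[of z] by auto
          then have "-pi / w \<le> Arg z / w" "Arg z / w \<le> pi / w"
            using w divide_right_mono[of "-pi" "Arg z" w] divide_right_mono[of "Arg z" pi w] by auto
          moreover have "pi / w = T / 2" using T unfolding w_def by simp
          ultimately show ?thesis unfolding t_def by auto
        qed
        moreover have "g t \<in> B" using z unfolding G_def t_def by simp
        ultimately show "z \<in> q ` K \<inter> S" unfolding K_def using z by auto
      qed
    qed
    then show "\<exists>A. closed A \<and> A \<inter> S = G -` B \<inter> S" using cA by blast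
  qed
  define P where "P = (\<lambda>F. continuous_on S F \<and> (\<exists>f. EP w (\<lambda>x. of_real (f x)) \<and> (\<forall>x. F (q x) = f x)))"
  have approx: "\<exists>f. EP w (\<lambda>x. of_real (f x)) \<and> (\<forall>t. \<bar>g t - f t\<bar> < e)" if e: "e > 0" for e
  proof -
    have "\<exists>F. P F \<and> (\<forall>x\<in>S. \<bar>G x - F x\<bar> < e)"
    proof (rule Stone_Weierstrass_HOL[of S P G e])
      show "compact S" unfolding S_def by simp
      show "P (\<lambda>x. c)" for c unfolding P_def
        by (intro conjI continuous_on_const exI[of _ "\<lambda>x. c"]) (auto intro: EP_const)
      show "continuous_on S F" if "P F" for F using that unfolding P_def by blast
      show "P (\<lambda>x. F1 x + F2 x)" if "P F1 \<and> P F2" for F1 F2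
      proof -
        from that obtain f1 f2 where f: "EP w (\<lambda>x. of_real (f1 x))" "\<forall>x. F1 (q x) = f1 x"
          "EP w (\<lambda>x. of_real (f2 x))" "\<forall>x. F2 (q x) = f2 x" and c: "continuous_on S F1" "continuous_on S F2"
          unfolding P_def by blast
        show ?thesis unfolding P_def
          by (intro conjI continuous_intros c exI[of _ "\<lambda>x. f1 x + f2 x"])
             (use f EP.EPa[OF f(1) f(3)] in auto)
      qed
      show "P (\<lambda>x. F1 x * F2 x)" if "P F1 \<and> P F2" for F1 F2
      proof -
        from that obtain f1 f2 where f: "EP w (\<lambda>x. of_real (f1 x))" "\<forall>x. F1 (q x) = f1 x"
          "EP w (\<lambda>x. of_real (f2 x))" "\<forall>x. F2 (q x) = f2 x" and c: "continuous_on S F1" "continuous_on S F2"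
          unfolding P_def by blast
        show ?thesis unfolding P_def
          by (intro conjI continuous_intros c exI[of _ "\<lambda>x. f1 x * f2 x"])
             (use f EP_mult[OF f(1) f(3)] in auto)
      qed
      show "\<exists>F. P F \<and> F x \<noteq> F y" if "x \<in> S \<and> y \<in> S \<and> x \<noteq> y" for x y
      proof (cases "Re x = Re y")
        case True
        then have "Im x \<noteq> Im y" using that complex_eqI by blast
        moreover have "P Im" unfolding P_def
          by (intro conjI continuous_intros exI[of _ "\<lambda>t. sin (w * t)"]) (auto simp: q_def EP_sin)
        ultimately show ?thesis by blast
      next
        case False
        moreover have "P Re" unfolding P_def
          by (intro conjI continuous_intros exI[of _ "\<lambda>t. cos (w * t)"]) (auto simp: q_def EP_cos)
        ultimately show ?thesis by blast
      qed
    qed (use Gc e in auto)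
    then obtain F f where h1: "\<forall>x\<in>S. \<bar>G x - F x\<bar> < e" "EP w (\<lambda>x. of_real (f x))" "\<forall>x. F (q x) = f x"
      unfolding P_def by blast
    have "\<forall>t. \<bar>g t - f t\<bar> < e"
    proof
      fix t
      have "\<bar>G (q t) - F (q t)\<bar> < e" using h1(1) qS by blast
      then show "\<bar>g t - f t\<bar> < e" using Gq h1(3) by simp
    qed
    then show ?thesis using h1(2) by blast
  qed
  have intc: "h integrable_on {0..T}" if "continuous_on UNIV h" for h :: "real \<Rightarrow> real"
    by (rule integrable_continuous_interval) (rule continuous_on_subset[OF that], auto)
  define I where "I = integral {0..T} (\<lambda>x. (g x)^2)"
  define A where "A = integral {0..T} (\<lambda>x. \<bar>g x\<bar>)"
  have A0: "A \<ge> 0" unfolding A_def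
    by (rule Henstock_Kurzweil_Integration.integral_nonneg) (auto intro!: intc continuous_intros gc)
  have I0: "I \<ge> 0" unfolding I_def
    by (rule Henstock_Kurzweil_Integration.integral_nonneg) (auto intro!: intc continuous_intros gc)
  have le: "I \<le> e * A" if e: "e > 0" for e
  proof -
    obtain f where f: "EP w (\<lambda>x. of_real (f x))" "\<forall>t. \<bar>g t - f t\<bar> < e" using approx[OF e] by blast
    have "continuous_on UNIV (\<lambda>x. Re (complex_of_real (f x)))"
      by (intro continuous_intros EP_cont[OF f(1)])
    then have fc: "continuous_on UNIV f" by simp
    have "integral {0..T} (\<lambda>x. complex_of_real (g x) * complex_of_real (f x)) = 0"
      by (rule EP_pair[OF T w_def gc c0 f(1)])
    then have "integral {0..T} ((\<lambda>r. complex_of_real r) \<circ> (\<lambda>x. g x * f x)) = 0" by (simp add: o_def)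
    then have "complex_of_real (integral {0..T} (\<lambda>x. g x * f x)) = 0"
      by (subst (asm) integral_linear[OF intc bounded_linear_of_real]) (intro continuous_intros gc fc)
    then have z: "integral {0..T} (\<lambda>x. g x * f x) = 0" by simp
    have "I = integral {0..T} (\<lambda>x. g x * (g x - f x) + g x * f x)"
      unfolding I_def by (simp add: power2_eq_square algebra_simps)
    also have "\<dots> = integral {0..T} (\<lambda>x. g x * (g x - f x)) + integral {0..T} (\<lambda>x. g x * f x)"
      by (rule Henstock_Kurzweil_Integration.integral_add) (auto intro!: intc continuous_intros gc fc)
    also have "\<dots> = integral {0..T} (\<lambda>x. g x * (g x - f x))" using z by simp
    also have "\<dots> \<le> integral {0..T} (\<lambda>x. e * \<bar>g x\<bar>)"
    proof (rule Henstock_Kurzweil_Integration.integral_le)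
      show "(\<lambda>x. g x * (g x - f x)) integrable_on {0..T}" by (auto intro!: intc continuous_intros gc fc)
      show "(\<lambda>x. e * \<bar>g x\<bar>) integrable_on {0..T}" by (auto intro!: intc continuous_intros gc fc)
      fix x
      have "g x * (g x - f x) \<le> \<bar>g x\<bar> * \<bar>g x - f x\<bar>" by (metis abs_ge_self abs_mult)
      also have "\<dots> \<le> \<bar>g x\<bar> * e" using f(2) by (intro mult_left_mono) (auto simp: less_imp_le)
      finally show "g x * (g x - f x) \<le> e * \<bar>g x\<bar>" by (simp add: mult.commute)
    qed
    also have "\<dots> = e * A" unfolding A_def by simp
    finally show ?thesis .
  qed
  have "I \<le> 0 + e" if e: "e > 0" for e
  proof -
    have "e / (A + 1) > 0" using A0 e by simp
    from le[OF this] have "I \<le> (e / (A + 1)) * A" .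
    also have "\<dots> \<le> e" using A0 e by (simp add: field_simps)
    finally show ?thesis by simp
  qed
  then have "I \<le> 0" by (rule field_le_epsilon)
  with I0 have "I = 0" by simp
  then have "\<forall>x\<in>{0..T}. (g x)^2 = 0" unfolding I_def
    by (subst (asm) integral_eq_0_iff) (auto intro!: continuous_intros continuous_on_subset[OF gc] simp: T)
  moreover obtain y n where "y \<in> {0..<0+T}" "x = y + of_int n * T" using periodic_reduce[OF T] by blast
  ultimately show ?thesis using periodic_int[OF gp, of y n] by auto
qed



lemma family_eq:
  assumes b: "\<beta> > 0" and h: "\<forall>x. h x = \<alpha> + \<beta> * g (x - c)"
  shows "gvM_family h lmin lmax = gvM_family g lmin lmax"
proof
  show "gvM_family h lmin lmax \<subseteq> gvM_family g lmin lmax"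
  proof
    fix f assume "f \<in> gvM_family h lmin lmax"
    then obtain a b s where f: "f = (\<lambda>x. if x \<in> {lmin..lmax} then exp (b + a * h (x - s)) else 0)" and a: "a \<ge> 0"
      unfolding gvM_family_def by blast
    have "f = (\<lambda>x. if x \<in> {lmin..lmax} then exp ((b + a * \<alpha>) + (a * \<beta>) * g (x - (s + c))) else 0)"
      unfolding f using h by (auto simp: algebra_simps)
    moreover have "a * \<beta> \<ge> 0" using a b by simp
    ultimately show "f \<in> gvM_family g lmin lmax" unfolding gvM_family_def by blast
  qed
  show "gvM_family g lmin lmax \<subseteq> gvM_family h lmin lmax"
  proof
    fix f assume "f \<in> gvM_family g lmin lmax"
    then obtain a b s where f: "f = (\<lambda>x. if x \<in> {lmin..lmax} then exp (b + a * g (x - s)) else 0)" and a: "a \<ge> 0"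
      unfolding gvM_family_def by blast
    have eq: "b + a * g (x - s) = (b - a * \<alpha> / \<beta>) + (a / \<beta>) * h (x - (s - c))" for x
      using h b by (simp add: field_simps)
    have "f = (\<lambda>x. if x \<in> {lmin..lmax} then exp ((b - a * \<alpha> / \<beta>) + (a / \<beta>) * h (x - (s - c))) else 0)"
      unfolding f by (rule ext) (simp only: eq)
    moreover have "a / \<beta> \<ge> 0" using a b by simp
    ultimately show "f \<in> gvM_family h lmin lmax" unfolding gvM_family_def by blast
  qed
qed

lemma max_unique_k:
  fixes h :: "real \<Rightarrow> real"
  assumes T: "T > 0" and b: "\<beta> > 0" and hf: "\<forall>x. h x = \<alpha> + \<beta> * cos (of_int k * (2*pi/T) * x + \<phi>)"
    and k: "k > 0" and hp: "\<forall>x. h (x + T) = h x"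
    and u: "\<exists>!x. x \<in> {lmin..<lmin+T} \<and> (\<forall>y. h y \<le> h x)"
  shows "k = 1"
proof -
  have kr: "real_of_int k > 0" using k by simp
  define x0 where "x0 = - \<phi> / (of_int k * (2*pi/T))"
  define x1 where "x1 = x0 + T / of_int k"
  have a0: "of_int k * (2*pi/T) * x0 + \<phi> = 0" unfolding x0_def using kr T by (simp add: field_simps)
  have a1: "of_int k * (2*pi/T) * x1 + \<phi> = 2 * pi" unfolding x1_def x0_def using kr T by (simp add: field_simps)
  have ub: "h y \<le> \<alpha> + \<beta>" for y using hf b by simp
  have m0: "h x0 = \<alpha> + \<beta>" using hf a0 by simp
  have m1: "h x1 = \<alpha> + \<beta>" using hf a1 by simp
  obtain y0 n0 where y0: "y0 \<in> {lmin..<lmin+T}" "x0 = y0 + of_int n0 * T" using periodic_reduce[OF T] by blast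
  obtain y1 n1 where y1: "y1 \<in> {lmin..<lmin+T}" "x1 = y1 + of_int n1 * T" using periodic_reduce[OF T] by blast
  have "h y0 = h x0" using y0 periodic_int[OF hp, of y0 n0] by simp
  have "h y1 = h x1" using y1 periodic_int[OF hp, of y1 n1] by simp
  have "\<forall>y. h y \<le> h y0" using \<open>h y0 = h x0\<close> m0 ub by simp
  moreover have "\<forall>y. h y \<le> h y1" using \<open>h y1 = h x1\<close> m1 ub by simp
  ultimately have "y0 = y1" using u y0(1) y1(1) by blast
  then have "T / of_int k = of_int (n1 - n0) * T" using y0 y1 unfolding x1_def by (simp add: algebra_simps)
  then have "T * 1 = T * (of_int (n1 - n0) * of_int k)" using kr by (simp add: field_simps)
  then have "(1::real) = of_int (n1 - n0) * of_int k" using T by simp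
  then have "(n1 - n0) * k = 1" by (metis of_int_eq_1_iff of_int_mult)
  then show ?thesis using k by (auto simp: zmult_eq_1_iff)
qed

lemma cmod_one_plus_cis:
  assumes "cmod (1 + cis \<theta>) = 2"
  shows "cos \<theta> = 1"
proof -
  have "(cmod (1 + cis \<theta>))^2 = (1 + cos \<theta>)^2 + (sin \<theta>)^2" by (simp add: cmod_power2)
  also have "\<dots> = 2 + 2 * cos \<theta>" using sin_cos_squared_add[of \<theta>] by (simp add: power2_eq_square algebra_simps)
  finally show ?thesis using assms by simp
qed





lemma coef_add_cmult:
  assumes "continuous_on UNIV p" "continuous_on UNIV q"
  shows "coefC T (\<lambda>x. c * p x + q x) k = c * coefC T p k + coefC T q k"
proof -
  have "continuous_on UNIV (\<lambda>x. c * p x)" by (intro continuous_intros assms)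
  then show ?thesis using coef_add[OF _ assms(2)] coef_cmult by metis
qed

lemma cis_minus_2pi: "cis (- (2 * pi)) = 1"
  by (simp add: complex_eq_iff)

theorem proposition3:
  fixes h :: "real \<Rightarrow> real" and lmin lmax :: real
  assumes "lmin < lmax"
    and "continuous_on UNIV h"
    and "\<forall>x. h (x + (lmax - lmin)) = h x"
    and "\<exists>!x. x \<in> {lmin..<lmax} \<and> (\<forall>y. h y \<le> h x)"
    and "mult_closed (gvM_family h lmin lmax)"
  shows "gvM_family h lmin lmax =
         gvM_family (\<lambda>x. cos (2 * pi * x / (lmax - lmin))) lmin lmax"
proof -
  define T where "T = lmax - lmin"
  have T: "T > 0" using assms(1) T_def by simp
  have hc: "continuous_on UNIV h" using assms(2) .
  have hp: "\<forall>x. h (x + T) = h x" using assms(3) unfolding T_def .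
  define H where "H = (\<lambda>x. complex_of_real (h x))"
  have Hc: "continuous_on UNIV H" unfolding H_def by (intro continuous_intros hc)
  have Hp: "\<forall>x. H (x + T) = H x" unfolding H_def using hp by simp
  have hsc: "continuous_on UNIV (\<lambda>x. h (x - s))" for s
    by (rule continuous_on_compose2[OF hc]) (auto intro!: continuous_intros)
  have Hsc: "continuous_on UNIV (\<lambda>x. H (x - s))" for s
    unfolding H_def by (intro continuous_intros hsc)
  define C where "C = coefC T H"

  have FE: "\<exists>a b t. \<forall>x. h x + h (x - s) = b + a * h (x - t)" for s
  proof -
    define f1 where "f1 = (\<lambda>x. if x \<in> {lmin..lmax} then exp (0 + 1 * h (x - 0)) else 0)"
    define f2 where "f2 = (\<lambda>x. if x \<in> {lmin..lmax} then exp (0 + 1 * h (x - s)) else 0)"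
    have "f1 \<in> gvM_family h lmin lmax" unfolding gvM_family_def f1_def
      by (rule CollectI, rule exI[of _ 1], rule exI[of _ 0], rule exI[of _ 0]) simp
    moreover have "f2 \<in> gvM_family h lmin lmax" unfolding gvM_family_def f2_def
      by (rule CollectI, rule exI[of _ 1], rule exI[of _ 0], rule exI[of _ s]) simp
    ultimately have "(\<lambda>x. f1 x * f2 x) \<in> gvM_family h lmin lmax"
      using assms(5) unfolding mult_closed_def by blast
    then obtain a b t where ab: "(\<lambda>x. f1 x * f2 x) = (\<lambda>x. if x \<in> {lmin..lmax} then exp (b + a * h (x - t)) else 0)"
      unfolding gvM_family_def by blast
    have onI: "h x + h (x - s) = b + a * h (x - t)" if x: "x \<in> {lmin..lmax}" for x
    proof -
      have "f1 x * f2 x = exp (b + a * h (x - t))" using fun_cong[OF ab, of x] x by simp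
      then have "exp (h x + h (x - s)) = exp (b + a * h (x - t))" using x unfolding f1_def f2_def by (simp add: exp_add)
      then show ?thesis by simp
    qed
    have "h x + h (x - s) = b + a * h (x - t)" for x
    proof -
      obtain y n where y: "y \<in> {lmin..<lmin+T}" "x = y + of_int n * T" using periodic_reduce[OF T] by blast
      have yI: "y \<in> {lmin..lmax}" using y(1) T_def by auto
      have e1: "h x = h y" using y(2) periodic_int[OF hp] by simp
      have e2: "h (x - s) = h (y - s)" using y(2) periodic_int[OF hp, of "y - s" n] by (simp add: algebra_simps)
      have e3: "h (x - t) = h (y - t)" using y(2) periodic_int[OF hp, of "y - t" n] by (simp add: algebra_simps)
      show ?thesis using onI[OF yI] e1 e2 e3 by simp
    qed
    then show ?thesis by blast
  qed

  have rel: "\<exists>a. \<forall>k. k \<noteq> 0 \<longrightarrow> C k \<noteq> 0 \<longrightarrow> cmod (1 + cis (- (of_int k * (2*pi/T) * s))) = a" for s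
  proof -
    obtain a b t where fe: "\<forall>x. h x + h (x - s) = b + a * h (x - t)" using FE by blast
    have eqf: "(\<lambda>x. H x + H (x - s)) = (\<lambda>x. of_real b + of_real a * H (x - t))"
    proof (rule ext)
      fix x
      have "complex_of_real (h x + h (x - s)) = complex_of_real (b + a * h (x - t))" using fe by simp
      then show "H x + H (x - s) = of_real b + of_real a * H (x - t)" unfolding H_def by simp
    qed
    have "\<forall>k. k \<noteq> 0 \<longrightarrow> C k \<noteq> 0 \<longrightarrow> cmod (1 + cis (- (of_int k * (2*pi/T) * s))) = \<bar>a\<bar>"
    proof (intro allI impI)
      fix k :: int assume k: "k \<noteq> 0" and Ck: "C k \<noteq> 0"
      have L: "coefC T (\<lambda>x. H x + H (x - s)) k = C k + cis (- (of_int k * (2*pi/T) * s)) * C k"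
        unfolding C_def using coef_add[OF Hc Hsc] coef_shift[OF T Hc Hp] by simp
      have "coefC T (\<lambda>x. of_real b + of_real a * H (x - t)) k
            = coefC T (\<lambda>x. of_real b) k + coefC T (\<lambda>x. of_real a * H (x - t)) k"
        by (rule coef_add) (intro continuous_intros Hsc)+
      also have "\<dots> = of_real a * (cis (- (of_int k * (2*pi/T) * t)) * C k)"
        unfolding C_def using coef_const_zero[OF T k] coef_cmult coef_shift[OF T Hc Hp] by simp
      finally have R: "coefC T (\<lambda>x. of_real b + of_real a * H (x - t)) k = of_real a * (cis (- (of_int k * (2*pi/T) * t)) * C k)" .
      have "C k * (1 + cis (- (of_int k * (2*pi/T) * s))) = C k * (of_real a * cis (- (of_int k * (2*pi/T) * t)))"
        using L R eqf by (simp add: algebra_simps)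
      then have "1 + cis (- (of_int k * (2*pi/T) * s)) = of_real a * cis (- (of_int k * (2*pi/T) * t))"
        using Ck by simp
      then show "cmod (1 + cis (- (of_int k * (2*pi/T) * s))) = \<bar>a\<bar>" by (simp add: norm_mult)
    qed
    then show ?thesis by blast
  qed

  have Cneg: "C (-k) = cnj (C k)" for k
    unfolding C_def coefC_def H_def integral_cnj by (simp add: cis_cnj)

  have uniqk: "j = k" if jk0: "j > 0" "k > 0" "C j \<noteq> 0" "C k \<noteq> 0" for j k
  proof (rule ccontr)
    assume "j \<noteq> k"
    have main: False if jk: "0 < j" "j < k" "C j \<noteq> 0" "C k \<noteq> 0" for j k
    proof -
      obtain a where a: "\<forall>m. m \<noteq> 0 \<longrightarrow> C m \<noteq> 0 \<longrightarrow> cmod (1 + cis (- (of_int m * (2*pi/T) * (T / of_int k)))) = a"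
        using rel by blast
      have kr: "real_of_int k > 0" using jk by simp
      have "of_int k * (2*pi/T) * (T / of_int k) = 2*pi" using T kr by (simp add: field_simps)
      then have "cmod (1 + cis (- (of_int k * (2*pi/T) * (T / of_int k)))) = 2" by (simp add: cis_minus_2pi)
      then have "a = 2" using a jk by force
      then have "cmod (1 + cis (- (of_int j * (2*pi/T) * (T / of_int k)))) = 2" using a jk by auto
      then have "cos (- (of_int j * (2*pi/T) * (T / of_int k))) = 1" by (rule cmod_one_plus_cis)
      then obtain n :: int where n: "- (of_int j * (2*pi/T) * (T / of_int k)) = of_int n * 2 * pi"
        using cos_one_2pi_int by blast
      have "- (of_int j * (2*pi/T) * (T / of_int k)) = - (2 * pi * of_int j / of_int k)"
        using T by (simp add: field_simps)
      with n have "- (2 * pi * of_int j / of_int k) = of_int n * 2 * pi" by simp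
      then have "pi * (- real_of_int j) = pi * (of_int n * of_int k)" using kr by (simp add: field_simps)
      then have "- real_of_int j = of_int n * of_int k"
        using mult_left_cancel[of pi "- real_of_int j" "of_int n * of_int k"] pi_neq_zero by blast
      then have nk: "-j = n * k" by (metis of_int_eq_iff of_int_minus of_int_mult)
      have "n < 0"
      proof (rule ccontr)
        assume "\<not> n < 0"
        then have "n * k \<ge> 0" using jk by simp
        then show False using nk jk by simp
      qed
      then have "n * k \<le> -1 * k" using jk by (intro mult_right_mono) auto
      then show False using nk jk by simp
    qed
    from \<open>j \<noteq> k\<close> have "j < k \<or> k < j" by auto
    then show False using main jk0 by blast
  qed

  have C0real: "C 0 = of_real (Re (C 0))"
    using Cneg[of 0] by (simp add: complex_eq_iff)
  have cconst: "coefC T (\<lambda>x. c) 0 = c * of_real T" for c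
    unfolding coefC_def using T by (simp add: scaleR_conv_of_real)

  show ?thesis
  proof (cases "\<exists>k>0. C k \<noteq> 0")
    case False
    note noC = False
    have Cz: "C k = 0" if "k \<noteq> 0" for k
    proof (cases "k > 0")
      case True
      with noC show ?thesis by auto
    next
      case False
      then have "-k > 0" using that by simp
      then have "C (-k) = 0" using noC by auto
      then show ?thesis using Cneg[of "-k"] by simp
    qed
    define \<alpha> where "\<alpha> = Re (C 0) / T"
    have gz: "\<forall>k. coefC T (\<lambda>x. of_real (h x - \<alpha>)) k = 0"
    proof
      fix k
      have "coefC T (\<lambda>x. of_real (h x - \<alpha>)) k = coefC T (\<lambda>x. H x + (- of_real \<alpha>)) k"
        unfolding H_def by simp
      also have "\<dots> = C k + coefC T (\<lambda>x. - of_real \<alpha>) k"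
        unfolding C_def by (rule coef_add[OF Hc]) (intro continuous_intros)
      also have "\<dots> = 0"
      proof (cases "k = 0")
        case True
        have "C 0 + (- of_real \<alpha>) * of_real T = 0"
          using C0real T unfolding \<alpha>_def by (simp add: field_simps)
        then show ?thesis using True cconst by simp
      next
        case False
        then show ?thesis using Cz coef_const_zero[OF T False] by simp
      qed
      finally show "coefC T (\<lambda>x. of_real (h x - \<alpha>)) k = 0" .
    qed
    have "h x - \<alpha> = 0" for x
      by (rule fourier_unique[OF T _ _ gz]) (auto intro!: continuous_intros hc simp: hp)
    then have hconst: "h x = \<alpha>" for x by simp
    from assms(4) obtain x0 where x0: "\<And>y. y \<in> {lmin..<lmax} \<and> (\<forall>z. h z \<le> h y) \<Longrightarrow> y = x0" by blast
    have "lmin = x0" using x0[of lmin] hconst assms(1) by simp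
    moreover have "lmin + T/2 < lmax" using T unfolding T_def by (simp add: field_simps)
    then have "lmin + T/2 = x0" using x0[of "lmin + T/2"] hconst T by simp
    ultimately show ?thesis using T by simp
  next
    case True
    then obtain k0 where k0: "k0 > 0" "C k0 \<noteq> 0" by blast
    have Cz: "C k = 0" if k: "k \<noteq> 0" "k \<noteq> k0" "k \<noteq> -k0" for k
    proof (cases "k > 0")
      case True
      then show ?thesis using uniqk[OF _ k0(1) _ k0(2)] k by blast
    next
      case False
      then have "-k > 0" using k by simp
      then have "C (-k) = 0" using uniqk[OF _ k0(1) _ k0(2), of "-k"] k by force
      then show ?thesis using Cneg[of "-k"] by simp
    qed
    define c0 where "c0 = Re (C 0)"
    define Ck where "Ck = C k0"
    define r where "r = (\<lambda>x. (c0 + 2 * Re (Ck * cis (of_int k0 * (2*pi/T) * x))) / T)"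
    have rC: "complex_of_real (r x) = of_real c0 / of_real T + (Ck / of_real T) * cis (of_int k0 * (2*pi/T) * x)
               + (cnj Ck / of_real T) * cis (of_int (-k0) * (2*pi/T) * x)" for x
    proof -
      define z where "z = Ck * cis (of_int k0 * (2*pi/T) * x)"
      have cz: "cnj z = cnj Ck * cis (of_int (-k0) * (2*pi/T) * x)" unfolding z_def by (simp add: cis_cnj)
      have "complex_of_real (r x) = (of_real c0 + complex_of_real (2 * Re z)) / of_real T"
        unfolding r_def z_def by simp
      also have "complex_of_real (2 * Re z) = z + cnj z" by (simp add: complex_add_cnj)
      finally show ?thesis unfolding cz by (simp add: z_def add_divide_distrib)
    qed
    have rc: "continuous_on UNIV r" unfolding r_def using T by (intro continuous_intros) auto
    have rp: "\<forall>x. r (x + T) = r x"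
    proof
      fix x
      have "cis (of_int k0 * (2*pi/T) * (x + T)) = cis (of_int k0 * (2*pi/T) * x)"
        using cis_per[OF T, of "-k0" x] by simp
      then show "r (x + T) = r x" unfolding r_def by simp
    qed
    define e where "e = (\<lambda>j::int. \<lambda>x::real. cis (of_int j * (2*pi/T) * x))"
    have ec: "continuous_on UNIV (e j)" for j unfolding e_def by (intro continuous_intros)
    have ecoef: "coefC T (e j) k = (if j = k then of_real T else 0)" for j k
      unfolding e_def by (rule coef_cis[OF T])
    have gz: "\<forall>k. coefC T (\<lambda>x. of_real (h x - r x)) k = 0"
    proof
      fix k
      define a0 where "a0 = - (complex_of_real c0 / of_real T)"
      define a1 where "a1 = - (Ck / of_real T)"
      define a2 where "a2 = - (cnj Ck / of_real T)"
      have eqfun: "(\<lambda>x. complex_of_real (h x - r x)) = (\<lambda>x. H x + (a0 * e 0 x + (a1 * e k0 x + a2 * e (-k0) x)))"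
        by (rule ext) (simp add: H_def rC e_def a0_def a1_def a2_def)
      have f1: "coefC T (\<lambda>x. H x + (a0 * e 0 x + (a1 * e k0 x + a2 * e (-k0) x))) k
          = coefC T H k + coefC T (\<lambda>x. a0 * e 0 x + (a1 * e k0 x + a2 * e (-k0) x)) k"
        by (rule coef_add[OF Hc]) (intro continuous_intros ec)
      have f2: "coefC T (\<lambda>x. a0 * e 0 x + (a1 * e k0 x + a2 * e (-k0) x)) k
          = a0 * coefC T (e 0) k + coefC T (\<lambda>x. a1 * e k0 x + a2 * e (-k0) x) k"
        by (rule coef_add_cmult[OF ec]) (intro continuous_intros ec)
      have f3: "coefC T (\<lambda>x. a1 * e k0 x + a2 * e (-k0) x) k
          = a1 * coefC T (e k0) k + coefC T (\<lambda>x. a2 * e (-k0) x) k"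
        by (rule coef_add_cmult[OF ec]) (intro continuous_intros ec)
      have f4: "coefC T (\<lambda>x. a2 * e (-k0) x) k = a2 * coefC T (e (-k0)) k" by (rule coef_cmult)
      have "coefC T (\<lambda>x. of_real (h x - r x)) k = C k + (a0 * coefC T (e 0) k
              + (a1 * coefC T (e k0) k + a2 * coefC T (e (-k0)) k))"
        unfolding eqfun f1 f2 f3 f4 C_def ..
      also have "\<dots> = 0"
        using T k0 C0real Cneg[of k0] Cz[of k] unfolding ecoef c0_def Ck_def a0_def a1_def a2_def by auto
      finally show "coefC T (\<lambda>x. of_real (h x - r x)) k = 0" .
    qed
    have "h x - r x = 0" for x
      by (rule fourier_unique[OF T _ _ gz]) (auto intro!: continuous_intros hc rc simp: hp rp)
    then have hr: "h x = r x" for x by simp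
    define \<beta> where "\<beta> = 2 * cmod Ck / T"
    define \<alpha> where "\<alpha> = c0 / T"
    have \<beta>: "\<beta> > 0" unfolding \<beta>_def Ck_def using k0 T by simp
    have hf: "\<forall>x. h x = \<alpha> + \<beta> * cos (of_int k0 * (2*pi/T) * x + Arg Ck)"
    proof
      fix x
      define \<theta> where "\<theta> = of_int k0 * (2*pi/T) * x"
      have "Ck * cis \<theta> = rcis (cmod Ck) (Arg Ck) * cis \<theta>" by (simp add: rcis_cmod_Arg)
      also have "\<dots> = of_real (cmod Ck) * (cis (Arg Ck) * cis \<theta>)" by (simp add: rcis_def mult.assoc)
      also have "\<dots> = of_real (cmod Ck) * cis (\<theta> + Arg Ck)" by (simp add: cis_mult add.commute)
      finally have "Re (Ck * cis \<theta>) = cmod Ck * cos (\<theta> + Arg Ck)" by simp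
      then show "h x = \<alpha> + \<beta> * cos (of_int k0 * (2*pi/T) * x + Arg Ck)"
        unfolding hr r_def \<alpha>_def \<beta>_def \<theta>_def using T by (simp add: field_simps)
    qed
    have u: "\<exists>!x. x \<in> {lmin..<lmin+T} \<and> (\<forall>y. h y \<le> h x)" using assms(4) unfolding T_def by simp
    have k1: "k0 = 1" by (rule max_unique_k[OF T \<beta> hf k0(1) hp u])
    define c where "c = - Arg Ck * T / (2 * pi)"
    have "\<forall>x. h x = \<alpha> + \<beta> * (\<lambda>x. cos (2 * pi * x / (lmax - lmin))) (x - c)"
    proof
      fix x
      have "2 * pi * (x - c) / (lmax - lmin) = of_int k0 * (2*pi/T) * x + Arg Ck"
        using k1 T unfolding T_def[symmetric] c_def by (simp add: field_simps)
      then show "h x = \<alpha> + \<beta> * (\<lambda>x. cos (2 * pi * x / (lmax - lmin))) (x - c)" using hf by simp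
    qed
    then show ?thesis by (rule family_eq[OF \<beta>])
  qed
qed


end
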